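(* Let $\gamma\in\mathbb Q\cap(0,1)$ and let $\gamma_2$ be its right Farey parent. For every $\beta\in(1,2)$ with $$\mathbf d_\beta\in[\,w_\gamma^\infty,\ w_{\gamma_2}w_\gamma^\infty\,]$$ in the lexicographic order, one has $\gamma(\beta)=\gamma$.
   Context: For $\beta\in(1,2)$, let $\mathbf d_\beta=d_1d_2\dots$ be the quasi-greedy expansion of $1$. It equals the greedy expansion $\tilde d_i=\lfloor\beta T_\beta^{i-1}(1)\rfloor$ of $1$ if that expansion does not end in $0^\infty$. If instead the greedy expansion is $\tilde d_1\dots\tilde d_k0^\infty$ with $\tilde d_k=1$, then $\mathbf d_\beta=(\tilde d_1\dots\tilde d_{k-1}0)^\infty$. The admissible set is $X_\beta=\{(x_i)\in\{0,1\}^{\mathbb N}: x_jx_{j+1}\dots\preceq\mathbf d_\beta\ \forall j\}$, where $\preceq$ is the lexicographic order. Farey tree of words: set $w_{0/1}=0$ and $w_{1/1}=1$. Two fractions $a/b<c/d$ are neighbours if $bc-ad=1$. For neighbours $\gamma_1=a/b<\gamma_2=c/d$, put $\gamma_1\oplus\gamma_2=(a+c)/(b+d)$ and $w_{\gamma_1\oplus\gamma_2}=w_{\gamma_2}w_{\gamma_1}$. Every rational $\gamma\in(0,1)$ arises uniquely as $\gamma=\gamma_1\oplus\gamma_2$ with neighbours $\gamma_1<\gamma_2$; these are its left and right Farey parents. The word $w_\gamma$ is the lexicographically maximal cyclic shift of the cyclically balanced word of length $q$ with $p$ ones, where $\gamma=p/q$. $\gamma(\beta)$: the number $\gamma\in[0,1]$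 associated to the lexicographically maximal admissible balanced sequence. Equivalently, $\gamma(\beta)=\sup\{\gamma\in\mathbb Q\cap[0,1]: w_\gamma^\infty\in X_\beta\}$. It satisfies: $w_\gamma^\infty$ is admissible iff $\gamma\le\gamma(\beta)$. *)

theory Defs
  imports Complex_Main
begin

text \<open>Infinite 0-1 sequences are functions nat => nat; index 0 is the first digit.\<close>

definition lex_le :: "(nat \<Rightarrow> nat) \<Rightarrow> (nat \<Rightarrow> nat) \<Rightarrow> bool" where
  "lex_le x y \<longleftrightarrow> x = y \<or> (\<exists>n. (\<forall>i<n. x i = y i) \<and> x n < y n)"

definition beta_map :: "real \<Rightarrow> real \<Rightarrow> real" where
  "beta_map \<beta> x = \<beta> * x - of_int \<lfloor>\<beta> * x\<rfloor>"

definition greedy_one :: "real \<Rightarrow> nat \<Rightarrow> nat" where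
  "greedy_one \<beta> i = nat \<lfloor>\<beta> * (beta_map \<beta> ^^ i) 1\<rfloor>"

definition greedy_finite :: "real \<Rightarrow> nat \<Rightarrow> bool" where
  "greedy_finite \<beta> k \<longleftrightarrow> greedy_one \<beta> k = 1 \<and> (\<forall>j>k. greedy_one \<beta> j = 0)"

text \<open>Quasi-greedy expansion of 1: if the greedy expansion is
  d_1 ... d_k 0^infinity with d_k = 1, it is (d_1 ... d_{k-1} 0)^infinity.\<close>

definition quasi_greedy :: "real \<Rightarrow> nat \<Rightarrow> nat" where
  "quasi_greedy \<beta> =
     (if \<exists>k. greedy_finite \<beta> k then
        (let k = (THE k. greedy_finite \<beta> k) in
          (\<lambda>i. if i mod (Suc k) = k then 0 else greedy_one \<beta> (i mod (Suc k))))
      else greedy_one \<beta>)"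

definition admissible :: "real \<Rightarrow> (nat \<Rightarrow> nat) \<Rightarrow> bool" where
  "admissible \<beta> x \<longleftrightarrow> (\<forall>i. x i \<in> {0, 1}) \<and> (\<forall>j. lex_le (\<lambda>i. x (i + j)) (quasi_greedy \<beta>))"

definition farey_neighbours :: "rat \<Rightarrow> rat \<Rightarrow> bool" where
  "farey_neighbours g1 g2 \<longleftrightarrow>
     (case quotient_of g1 of (a, b) \<Rightarrow> case quotient_of g2 of (c, d) \<Rightarrow> b * c - a * d = 1)"

definition mediant :: "rat \<Rightarrow> rat \<Rightarrow> rat" where
  "mediant g1 g2 =
     (case quotient_of g1 of (a, b) \<Rightarrow> case quotient_of g2 of (c, d) \<Rightarrow> Fract (a + c) (b + d))"

inductive farey_word :: "rat \<Rightarrow> nat list \<Rightarrow> bool" where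
  zero: "farey_word 0 [0]"
| one: "farey_word 1 [1]"
| med: "farey_neighbours g1 g2 \<Longrightarrow> farey_word g1 u \<Longrightarrow> farey_word g2 v \<Longrightarrow>
        farey_word (mediant g1 g2) (v @ u)"

definition w :: "rat \<Rightarrow> nat list" where
  "w g = (THE u. farey_word g u)"

definition right_parent :: "rat \<Rightarrow> rat" where
  "right_parent g = (THE g2. \<exists>g1. farey_neighbours g1 g2 \<and> mediant g1 g2 = g)"

definition per :: "nat list \<Rightarrow> nat \<Rightarrow> nat" where
  "per u = (\<lambda>i. u ! (i mod length u))"

definition pre_per :: "nat list \<Rightarrow> nat list \<Rightarrow> nat \<Rightarrow> nat" where
  "pre_per v u = (\<lambda>i. if i < length v then v ! i else u ! ((i - length v) mod length u))"

definition gamma_of :: "real \<Rightarrow> real" where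
  "gamma_of \<beta> = Sup (real_of_rat ` {g. 0 \<le> g \<and> g \<le> 1 \<and> admissible \<beta> (per (w g))})"

end

theory Submission
  imports Defs
begin

lemma ceil_eps:
  fixes n k :: int and e :: rat
  assumes "0 < k" "0 \<le> e" "e < 1 / of_int k"
  shows "\<lceil>of_int n / of_int k - e\<rceil> = \<lceil>of_int n / of_int k :: rat\<rceil>"
proof -
  define m where "m = \<lceil>of_int n / of_int k :: rat\<rceil>"
  have k: "(0::rat) < of_int k" using assms by simp
  have "of_int m - 1 < (of_int n / of_int k :: rat)" unfolding m_def by (rule ceiling_correct[THEN conjunct1])
  hence "(of_int m - 1) * of_int k < (of_int n :: rat)" using k by (simp add: field_simps)
  hence "of_int (k * (m - 1)) < (of_int n :: rat)" by (simp add: algebra_simps)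
  hence "k * (m - 1) < n" by (simp only: of_int_less_iff)
  hence "k * (m - 1) \<le> n - 1" by simp
  hence "of_int (k * (m - 1)) \<le> (of_int (n - 1) :: rat)" by (simp only: of_int_le_iff)
  hence "(of_int m - 1) * of_int k \<le> (of_int n - 1 :: rat)" by (simp add: algebra_simps)
  hence "of_int m - 1 \<le> (of_int n - 1) / (of_int k :: rat)" using k by (simp add: field_simps)
  also have "\<dots> = of_int n / of_int k - 1 / of_int k" using k by (simp add: field_simps)
  finally have 1: "of_int m - 1 < (of_int n / of_int k - e :: rat)" using assms(3) by simp
  have 2: "of_int n / of_int k - e \<le> (of_int m :: rat)" unfolding m_def using assms(2) le_of_int_ceiling[of "of_int n / of_int k :: rat"]
    by linarith
  show ?thesis unfolding m_def[symmetric] using 1 2 by (simp add: ceiling_unique)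
qed
lemma id1:
  fixes A B C D N :: rat
  assumes "B*C - A*D = 1" "D \<noteq> 0" "B + D \<noteq> 0"
  shows "N*((A+C)/(B+D)) = N*C/D - N/(D*(B+D))"
proof -
  have "N*C/D = (N*C*(B+D))/(D*(B+D))" using assms(3) by simp
  hence "N*C/D - N/(D*(B+D)) = (N*C*(B+D) - N)/(D*(B+D))" by (simp add: diff_divide_distrib)
  also have "N*C*(B+D) - N = N*(A+C)*D" using assms(1) by algebra
  also have "N*(A+C)*D/(D*(B+D)) = N*((A+C)/(B+D))" using assms(2) by simp
  finally show ?thesis by simp
qed
lemma id2:
  fixes A B C D J :: rat
  assumes "B*C - A*D = 1" "B \<noteq> 0" "B + D \<noteq> 0"
  shows "(D+J)*((A+C)/(B+D)) = (C*B+J*A)/B - (B-J)/(B*(B+D))"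
proof -
  have "(C*B+J*A)/B = ((C*B+J*A)*(B+D))/(B*(B+D))" using assms(3) by simp
  hence "(C*B+J*A)/B - (B-J)/(B*(B+D)) = ((C*B+J*A)*(B+D) - (B-J))/(B*(B+D))" by (simp add: diff_divide_distrib)
  also have "(C*B+J*A)*(B+D) - (B-J) = (D+J)*(A+C)*B" using assms(1) by algebra
  also have "(D+J)*(A+C)*B/(B*(B+D)) = (D+J)*((A+C)/(B+D))" using assms(2) by simp
  finally show ?thesis by simp
qed
lemma L1:
  fixes a b c d :: int and N :: nat
  assumes b: "0 < b" and d: "0 < d" and h: "b * c - a * d = 1" and N: "int N \<le> d"
  shows "\<lceil>of_nat N * (of_int (a+c) / of_int (b+d)) :: rat\<rceil> = \<lceil>of_nat N * (of_int c / of_int d) :: rat\<rceil>"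
proof -
  define e :: rat where "e = of_nat N / (of_int d * (of_int b + of_int d))"
  have bq: "(0::rat) < of_int b" "(0::rat) < of_int d" using b d by auto
  have hr: "(of_int b * of_int c - of_int a * of_int d :: rat) = 1" using h
    by (metis of_int_1 of_int_diff of_int_mult)
  have eq: "of_nat N * (of_int (a+c) / of_int (b+d)) = of_int (int N * c) / of_int d - e"
    unfolding e_def using id1[OF hr, of "of_nat N"] bq by simp
  have e0: "0 \<le> e" unfolding e_def using bq by simp
  have "e \<le> of_int d / (of_int d * (of_int b + of_int d))" unfolding e_def using bq N
    by (intro divide_right_mono) auto
  also have "\<dots> = 1 / (of_int b + of_int d)" using bq by simp
  also have "\<dots> < 1 / of_int d" using bq by (simp add: frac_less2)
  finally have e1: "e < 1 / of_int d" .
  show ?thesis unfolding eq using ceil_eps[OF d e0 e1, of "int N * c"] by simp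
qed

lemma L2:
  fixes a b c d :: int and j :: nat
  assumes b: "0 < b" and d: "0 < d" and h: "b * c - a * d = 1" and j: "int j \<le> b"
  shows "\<lceil>(of_int d + of_nat j) * (of_int (a+c) / of_int (b+d)) :: rat\<rceil> = c + \<lceil>of_nat j * (of_int a / of_int b) :: rat\<rceil>"
proof -
  define e :: rat where "e = (of_int b - of_nat j) / (of_int b * (of_int b + of_int d))"
  have bq: "(0::rat) < of_int b" "(0::rat) < of_int d" using b d by auto
  have jb: "(of_nat j :: rat) \<le> of_int b" using j by (metis of_int_le_iff of_int_of_nat_eq)
  have hr: "(of_int b * of_int c - of_int a * of_int d :: rat) = 1" using h
    by (metis of_int_1 of_int_diff of_int_mult)
  have eq: "(of_int d + of_nat j) * (of_int (a+c) / of_int (b+d)) = of_int (c * b + int j * a) / of_int b - e"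
    unfolding e_def using id2[OF hr, of "of_nat j"] bq by simp
  have e0: "0 \<le> e" unfolding e_def using bq jb by simp
  have "e \<le> of_int b / (of_int b * (of_int b + of_int d))" unfolding e_def using bq jb
    by (intro divide_right_mono) auto
  also have "\<dots> = 1 / (of_int b + of_int d)" using bq by simp
  also have "\<dots> < 1 / of_int b" using bq by (simp add: frac_less2)
  finally have e1: "e < 1 / of_int b" .
  have "\<lceil>(of_int d + of_nat j) * (of_int (a+c) / of_int (b+d)) :: rat\<rceil> = \<lceil>of_int (c * b + int j * a) / of_int b :: rat\<rceil>"
    unfolding eq by (rule ceil_eps[OF b e0 e1])
  also have "(of_int (c * b + int j * a) / of_int b :: rat) = of_nat j * (of_int a / of_int b) + of_int c"
    using bq by (simp add: field_simps)
  finally show ?thesis by simp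
qed
definition F :: "rat \<Rightarrow> nat \<Rightarrow> int" where "F g n = \<lceil>of_nat n * g\<rceil>"
definition C :: "rat \<Rightarrow> nat list" where
  "C g = map (\<lambda>i. nat (F g (Suc i) - F g i)) [0..<nat (snd (quotient_of g))]"

lemma coprime_lin: "u * x + v * y = (1::int) \<Longrightarrow> coprime x y"
proof (rule coprimeI)
  fix c assume "u * x + v * y = 1" "c dvd x" "c dvd y"
  have "c dvd u * x + v * y" using \<open>c dvd x\<close> \<open>c dvd y\<close> by (intro dvd_add dvd_mult)
  then have "c dvd 1" by (simp only: \<open>u * x + v * y = 1\<close>)
  then show "is_unit c" .
qed

lemma quot_val: "quotient_of g = (a, b) \<Longrightarrow> g = of_int a / of_int b"
  by (rule quotient_of_div)

lemma C_med:
  assumes q1: "quotient_of g1 = (a,b)" and q2: "quotient_of g2 = (c,d)" and h: "b*c - a*d = 1"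
  shows "quotient_of (mediant g1 g2) = (a+c, b+d)" and "C (mediant g1 g2) = C g2 @ C g1"
proof -
  have b: "0 < b" and d: "0 < d" using q1 q2 quotient_of_denom_pos by blast+
  have med: "mediant g1 g2 = Fract (a+c) (b+d)" unfolding mediant_def using q1 q2 by simp
  have cop: "coprime (a+c) (b+d)" by (rule coprime_lin[of b _ "-a"]) (use h in \<open>simp add: algebra_simps\<close>)
  show qm: "quotient_of (mediant g1 g2) = (a+c, b+d)" unfolding med quotient_of_Fract
    using cop b d by simp
  have mv: "mediant g1 g2 = of_int (a+c) / of_int (b+d)" unfolding med by (simp add: Fract_of_int_quotient)
  have g1v: "g1 = of_int a / of_int b" and g2v: "g2 = of_int c / of_int d" using q1 q2 quot_val by blast+
  have F1: "F (mediant g1 g2) k = F g2 k" if "k \<le> nat d" for k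
    unfolding F_def mv using L1[OF b d h, of k] that g2v d by (simp add: le_nat_iff)
  have F2: "F (mediant g1 g2) (nat d + j) = c + F g1 j" if "j \<le> nat b" for j
    unfolding F_def mv using L2[OF b d h, of j] that d b g1v by (simp add: le_nat_iff)
  show "C (mediant g1 g2) = C g2 @ C g1"
  proof (rule nth_equalityI)
    show "length (C (mediant g1 g2)) = length (C g2 @ C g1)"
      unfolding C_def qm using q1 q2 b d by simp
  next
    fix i assume "i < length (C (mediant g1 g2))"
    hence i: "i < nat d + nat b" unfolding C_def qm using b d by simp
    have bd: "nat (b + d) = nat d + nat b" using b d by simp
    show "C (mediant g1 g2) ! i = (C g2 @ C g1) ! i"
    proof (cases "i < nat d")
      case True
      then show ?thesis unfolding C_def qm using q1 q2 i bd F1[of i] F1[of "Suc i"]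
        by (simp add: nth_append)
    next
      case False
      then obtain j where j: "i = nat d + j" "j < nat b" using i by (metis add_less_imp_less_left le_Suc_ex not_less)
      then show ?thesis unfolding C_def qm using q1 q2 i bd F2[of j] F2[of "Suc j"] b d
        by (simp add: nth_append)
    qed
  qed
qed
lemma decomp:
  assumes qg: "quotient_of g = (p,q)" and g0: "0 < g" and g1: "g < 1"
  shows "\<exists>a b c d. 0 \<le> a \<and> a < b \<and> 0 < c \<and> c \<le> d \<and> b*c - a*d = 1 \<and> a + c = p \<and> b + d = q"
proof -
  have q0: "0 < q" using qg quotient_of_denom_pos by blast
  have cop: "coprime p q" using qg quotient_of_coprime by blast
  have gv: "g = of_int p / of_int q" using qg quot_val by blast
  have qr: "(0::rat) < of_int q" using q0 by simp
  have "(0::rat) < of_int p" using g0 qr unfolding gv by (simp add: zero_less_divide_iff)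
  hence p0: "0 < p" by simp
  have "(of_int p::rat) < of_int q" using g1 qr unfolding gv by (simp add: divide_less_eq)
  hence pq: "p < q" by simp
  obtain u v where uv: "u*p + v*q = 1" using bezout_int[of p q] cop by auto
  define b where "b = u mod q"
  define a where "a = - (v + (u div q) * p)"
  have ud: "u = (u div q) * q + b" unfolding b_def by simp
  have h1: "b*p - a*q = 1"
  proof -
    have bb: "b = u - (u div q) * q" using ud by simp
    have "b*p - a*q = u*p + v*q" unfolding bb a_def by (simp add: algebra_simps)
    thus ?thesis using uv by simp
  qed
  have b0: "0 \<le> b" "b < q" unfolding b_def using q0 by auto
  have bne: "b \<noteq> 0"
  proof
    assume "b = 0"
    hence "q * (-a) = 1" using h1 by (simp add: algebra_simps)
    hence "q dvd 1" by (metis dvd_triv_left)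
    hence "q = 1" using q0 by simp
    thus False using p0 pq by simp
  qed
  hence bp: "0 < b" using b0 by simp
  have "1 \<le> b * p" using bp p0 by (simp add: int_one_le_iff_zero_less)
  hence "0 \<le> a * q" using h1 by simp
  hence a0: "0 \<le> a" using q0 by (simp add: zero_le_mult_iff)
  have "b * p < b * q" using bp pq by simp
  hence "a * q < b * q" using h1 by simp
  hence ab: "a < b" using q0 by simp
  define c where "c = p - a"
  define d where "d = q - b"
  have d0: "0 < d" unfolding d_def using b0 by simp
  have h: "b*c - a*d = 1" unfolding c_def d_def using h1 by (simp add: algebra_simps)
  have c0: "0 < c"
  proof (rule ccontr)
    assume "\<not> 0 < c"
    hence "b * c \<le> 0" using bp by (simp add: mult_le_0_iff)
    moreover have "0 \<le> a * d" using a0 d0 by simp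
    ultimately show False using h by simp
  qed
  have cd: "c \<le> d"
  proof (rule ccontr)
    assume "\<not> c \<le> d"
    hence m1: "b * 1 \<le> b * (c - d)" using bp by (intro mult_left_mono) auto
    have m2: "d * 1 \<le> d * (b - a)" using d0 ab by (intro mult_left_mono) auto
    have m3: "b*c - a*d = b * (c - d) + d * (b - a)" by (simp add: algebra_simps)
    show False using h bp d0 m1 m2 m3 by linarith
  qed
  show ?thesis
    by (rule exI[of _ a], rule exI[of _ b], rule exI[of _ c], rule exI[of _ d])
       (use a0 ab c0 cd h in \<open>simp add: c_def d_def\<close>)
qed
lemma C0: "C 0 = [0]" by (simp add: C_def F_def)
lemma C1: "C 1 = [1]" by (simp add: C_def F_def)

lemma fw_C: "farey_word g u \<Longrightarrow> u = C g"
proof (induction rule: farey_word.induct)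
  case zero then show ?case by (simp add: C0)
next
  case one then show ?case by (simp add: C1)
next
  case (med g1 g2 u v)
  obtain a b where q1: "quotient_of g1 = (a,b)" by (cases "quotient_of g1")
  obtain c d where q2: "quotient_of g2 = (c,d)" by (cases "quotient_of g2")
  have h: "b*c - a*d = 1" using med.hyps(1) q1 q2 unfolding farey_neighbours_def by simp
  show ?case using C_med(2)[OF q1 q2 h] med.IH by simp
qed

lemma quot_Fract: "0 < b \<Longrightarrow> coprime a b \<Longrightarrow> quotient_of (Fract a b) = (a, b)"
  by (simp add: quotient_of_Fract)

lemma fw_exists: "0 \<le> g \<Longrightarrow> g \<le> 1 \<Longrightarrow> farey_word g (C g)"
proof (induction "nat (snd (quotient_of g))" arbitrary: g rule: less_induct)
  case less
  show ?case
  proof (cases "g = 0 \<or> g = 1")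
    case True
    then show ?thesis using farey_word.zero farey_word.one by (auto simp: C0 C1)
  next
    case False
    hence g01: "0 < g" "g < 1" using less.prems by auto
    obtain p q where qg: "quotient_of g = (p,q)" by (cases "quotient_of g")
    obtain a b c d where abcd: "0 \<le> a" "a < b" "0 < c" "c \<le> d" "b*c - a*d = 1" "a + c = p" "b + d = q"
      using decomp[OF qg g01] by blast
    have b: "0 < b" using abcd by simp
    have d: "0 < d" using abcd by simp
    have cab: "coprime a b" by (rule coprime_lin[of "-d" _ c]) (use abcd in \<open>simp add: algebra_simps\<close>)
    have ccd: "coprime c d" by (rule coprime_lin[of b _ "-a"]) (use abcd in \<open>simp add: algebra_simps\<close>)
    define g1 where "g1 = Fract a b"
    define g2 where "g2 = Fract c d"
    have q1: "quotient_of g1 = (a,b)" unfolding g1_def using b cab by (rule quot_Fract)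
    have q2: "quotient_of g2 = (c,d)" unfolding g2_def using d ccd by (rule quot_Fract)
    have g1v: "g1 = of_int a / of_int b" unfolding g1_def by (simp add: Fract_of_int_quotient)
    have g2v: "g2 = of_int c / of_int d" unfolding g2_def by (simp add: Fract_of_int_quotient)
    have r1: "0 \<le> g1" "g1 \<le> 1" unfolding g1v using abcd b by (auto simp: divide_le_eq)
    have r2: "0 \<le> g2" "g2 \<le> 1" unfolding g2v using abcd d by (auto simp: divide_le_eq)
    have fw1: "farey_word g1 (C g1)"
      by (rule less.hyps) (use qg q1 abcd r1 in auto)
    have fw2: "farey_word g2 (C g2)"
      by (rule less.hyps) (use qg q2 abcd r2 in auto)
    have nb: "farey_neighbours g1 g2" unfolding farey_neighbours_def using q1 q2 abcd by simp
    have "mediant g1 g2 = Fract p q" unfolding mediant_def using q1 q2 abcd by simp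
    also have "\<dots> = g" using qg quot_val by (simp add: Fract_of_int_quotient)
    finally have mg: "mediant g1 g2 = g" .
    have "farey_word (mediant g1 g2) (C g2 @ C g1)" by (rule farey_word.med[OF nb fw1 fw2])
    then show ?thesis using C_med(2)[OF q1 q2 abcd(5)] mg by simp
  qed
qed

lemma w_eq: "0 \<le> g \<Longrightarrow> g \<le> 1 \<Longrightarrow> w g = C g"
  unfolding w_def by (rule the_equality) (auto intro: fw_exists dest: fw_C)
lemma rp:
  assumes qg: "quotient_of \<gamma> = (p,q)" and g01: "0 < \<gamma>" "\<gamma> < 1"
  shows "\<exists>a b c d. 0 \<le> a \<and> a < b \<and> 0 < c \<and> c \<le> d \<and> b*c - a*d = 1 \<and> a + c = p \<and> b + d = q
     \<and> quotient_of (right_parent \<gamma>) = (c,d)"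
proof -
  obtain a b c d where abcd: "0 \<le> a" "a < b" "0 < c" "c \<le> d" "b*c - a*d = 1" "a + c = p" "b + d = q"
    using decomp[OF qg g01] by blast
  have b: "0 < b" using abcd by simp
  have d: "0 < d" using abcd by simp
  have cab: "coprime a b" by (rule coprime_lin[of "-d" _ c]) (use abcd in \<open>simp add: algebra_simps\<close>)
  have ccd: "coprime c d" by (rule coprime_lin[of b _ "-a"]) (use abcd in \<open>simp add: algebra_simps\<close>)
  have cpq: "coprime q p" using qg quotient_of_coprime by (metis coprime_commute)
  define g1 where "g1 = Fract a b"
  define g2 where "g2 = Fract c d"
  have q1: "quotient_of g1 = (a,b)" unfolding g1_def using b cab by (rule quot_Fract)
  have q2: "quotient_of g2 = (c,d)" unfolding g2_def using d ccd by (rule quot_Fract)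
  have nb: "farey_neighbours g1 g2" unfolding farey_neighbours_def using q1 q2 abcd by simp
  have "mediant g1 g2 = Fract p q" unfolding mediant_def using q1 q2 abcd by simp
  also have "\<dots> = \<gamma>" using qg quot_val by (simp add: Fract_of_int_quotient)
  finally have mg: "mediant g1 g2 = \<gamma>" .
  have "right_parent \<gamma> = g2"
    unfolding right_parent_def
  proof (rule the_equality)
    show "\<exists>g1. farey_neighbours g1 g2 \<and> mediant g1 g2 = \<gamma>" using nb mg by blast
  next
    fix g2' assume "\<exists>g1'. farey_neighbours g1' g2' \<and> mediant g1' g2' = \<gamma>"
    then obtain g1' where nb': "farey_neighbours g1' g2'" and mg': "mediant g1' g2' = \<gamma>" by blast
    obtain a' b' where q1': "quotient_of g1' = (a',b')" by (cases "quotient_of g1'")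
    obtain c' d' where q2': "quotient_of g2' = (c',d')" by (cases "quotient_of g2'")
    have h': "b'*c' - a'*d' = 1" using nb' q1' q2' unfolding farey_neighbours_def by simp
    have b': "0 < b'" and d': "0 < d'" using q1' q2' quotient_of_denom_pos by blast+
    have "(a'+c', b'+d') = (p, q)" using C_med(1)[OF q1' q2' h'] mg' qg by simp
    hence pq': "p = a' + c'" "q = b' + d'" by auto
    have e1: "b'*p - a'*q = 1" using h' pq' by (simp add: algebra_simps)
    have e2: "b*p - a*q = 1" using abcd(5) unfolding abcd(6)[symmetric] abcd(7)[symmetric] by (simp add: algebra_simps)
    have e3: "(b - b') * p = (a - a') * q" using e1 e2 by (simp add: algebra_simps)
    have "q dvd (b - b') * p" unfolding e3 by simp
    hence dv: "q dvd (b - b')" using cpq coprime_dvd_mult_left_iff by blast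
    have "b - b' = 0"
    proof (rule ccontr)
      assume "b - b' \<noteq> 0"
      hence "\<bar>q\<bar> \<le> \<bar>b - b'\<bar>" using dv dvd_imp_le_int by blast
      thus False using b b' d d' pq' abcd by linarith
    qed
    hence bb: "b' = b" by simp
    hence "(a - a') * q = 0" using e3 by simp
    hence aa: "a' = a" using b d abcd by simp
    have "c' = c" "d' = d" using pq' abcd aa bb by auto
    then show "g2' = g2" using q2' q2 by (metis quotient_of_inject_eq)
  qed
  then show ?thesis using abcd q2 by blast
qed
definition S :: "(nat \<Rightarrow> nat) \<Rightarrow> nat \<Rightarrow> int" where "S x N = (\<Sum>i<N. int (x i))"

lemma lex_sums:
  assumes "\<And>N. S x N \<le> S y N"
  shows "lex_le x y"
proof (cases "x = y")
  case True then show ?thesis by (simp add: lex_le_def)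
next
  case False
  then obtain i where "x i \<noteq> y i" by auto
  define n where "n = (LEAST i. x i \<noteq> y i)"
  have xn: "x n \<noteq> y n" unfolding n_def by (rule LeastI) fact
  have eq: "\<forall>i<n. x i = y i" unfolding n_def using not_less_Least by blast
  have "S x n = S y n" unfolding S_def using eq by (intro sum.cong) auto
  moreover have "S x (Suc n) \<le> S y (Suc n)" by (rule assms)
  ultimately have "x n \<le> y n" unfolding S_def by simp
  hence "x n < y n" using xn by simp
  then show ?thesis unfolding lex_le_def using eq by blast
qed

lemma lex_strict:
  assumes "lex_le y x" "y \<noteq> x"
  shows "\<exists>N. S y N < S x N"
proof -
  obtain n where eq: "\<forall>i<n. y i = x i" and lt: "y n < x n" using assms unfolding lex_le_def by blast
  have "S y n = S x n" unfolding S_def using eq by (intro sum.cong) auto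
  hence "S y (Suc n) < S x (Suc n)" unfolding S_def using lt by simp
  then show ?thesis by blast
qed

lemma lex_trans:
  assumes "lex_le x y" "lex_le y z"
  shows "lex_le x z"
proof (cases "x = y \<or> y = z")
  case True then show ?thesis using assms by auto
next
  case False
  then obtain n1 where e1: "\<forall>i<n1. x i = y i" and l1: "x n1 < y n1" using assms(1) unfolding lex_le_def by blast
  obtain n2 where e2: "\<forall>i<n2. y i = z i" and l2: "y n2 < z n2" using assms(2) False unfolding lex_le_def by blast
  consider "n1 < n2" | "n2 < n1" | "n1 = n2" by linarith
  then show ?thesis
  proof cases
    case 1
    then have "\<forall>i<n1. x i = z i" "x n1 < z n1" using e1 e2 l1 by auto
    then show ?thesis unfolding lex_le_def by blast
  next
    case 2
    then have "\<forall>i<n2. x i = z i" "x n2 < z n2" using e1 e2 l2 by auto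
    then show ?thesis unfolding lex_le_def by blast
  next
    case 3
    then have "\<forall>i<n1. x i = z i" "x n1 < z n1" using e1 e2 l1 l2 by auto
    then show ?thesis unfolding lex_le_def by blast
  qed
qed

lemma F_mono: "0 \<le> g \<Longrightarrow> m \<le> n \<Longrightarrow> F g m \<le> F g n"
  unfolding F_def by (intro ceiling_mono mult_right_mono) auto

lemma F_0: "F g 0 = 0" by (simp add: F_def)

lemma F_per:
  assumes qg: "quotient_of g = (p,q)"
  shows "F g (k * nat q + r) = int k * p + F g r"
proof -
  have q0: "0 < q" using qg quotient_of_denom_pos by blast
  have gv: "g = of_int p / of_int q" using qg quot_val by blast
  have e: "of_nat (k * nat q + r) * g = of_nat r * g + of_int (int k * p)"
    unfolding gv using q0 by (simp add: field_simps)
  show ?thesis unfolding F_def e ceiling_add_of_int by simp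
qed

lemma per_C:
  assumes qg: "quotient_of g = (p,q)" and g0: "0 \<le> g"
  shows "int (per (C g) i) = F g (Suc i) - F g i"
proof -
  have q0: "0 < q" using qg quotient_of_denom_pos by blast
  define n where "n = nat q"
  have n0: "0 < n" unfolding n_def using q0 by simp
  have len: "length (C g) = n" unfolding C_def n_def qg by simp
  have "per (C g) i = nat (F g (Suc (i mod n)) - F g (i mod n))"
    unfolding per_def len unfolding C_def qg using n0 by (simp add: n_def)
  moreover have "F g (i mod n) \<le> F g (Suc (i mod n))" using g0 by (intro F_mono) auto
  moreover have "F g i = int (i div n) * p + F g (i mod n)"
    using F_per[OF qg, of "i div n" "i mod n"] unfolding n_def[symmetric] by simp
  moreover have "F g (Suc i) = int (i div n) * p + F g (Suc (i mod n))"
    using F_per[OF qg, of "i div n" "Suc (i mod n)"] unfolding n_def[symmetric]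
    by (metis add_Suc_right mult.commute div_mult_mod_eq)
  ultimately show ?thesis by simp
qed

lemma S_shift:
  assumes qg: "quotient_of g = (p,q)" and g0: "0 \<le> g"
  shows "S (\<lambda>i. per (C g) (i + j)) N = F g (N + j) - F g j"
  by (induction N) (simp_all add: S_def per_C[OF qg g0])

lemma per_C_01:
  assumes qg: "quotient_of g = (p,q)" and g0: "0 \<le> g" and g1: "g \<le> 1"
  shows "per (C g) i \<in> {0,1}"
proof -
  have "F g (Suc i) \<le> F g i + 1"
  proof -
    have "F g (Suc i) = \<lceil>of_nat i * g + g\<rceil>" unfolding F_def by (simp add: algebra_simps)
    also have "\<dots> \<le> \<lceil>of_nat i * g\<rceil> + \<lceil>g\<rceil>" by (rule ceiling_add_le)
    also have "\<lceil>g\<rceil> \<le> 1" using g1 by (simp add: ceiling_le_iff)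
    finally show ?thesis unfolding F_def by simp
  qed
  moreover have "F g i \<le> F g (Suc i)" using g0 by (intro F_mono) auto
  ultimately have "int (per (C g) i) = 0 \<or> int (per (C g) i) = 1" using per_C[OF qg g0, of i] by linarith
  then show ?thesis by auto
qed
lemma pre_per_lo:
  assumes q2: "quotient_of g2 = (c,d)" and "i < nat d"
  shows "pre_per (C g2) (C g) i = per (C g2) i"
proof -
  have len: "length (C g2) = nat d" unfolding C_def q2 by simp
  show ?thesis unfolding pre_per_def per_def len using assms(2) by simp
qed

lemma pre_per_hi:
  assumes q2: "quotient_of g2 = (c,d)"
  shows "pre_per (C g2) (C g) (nat d + n) = per (C g) n"
proof -
  have len: "length (C g2) = nat d" unfolding C_def q2 by simp
  show ?thesis unfolding pre_per_def per_def len by simp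
qed

lemma S_pre_lo:
  assumes q2: "quotient_of g2 = (c,d)" and g2: "0 \<le> g2"
  shows "N \<le> nat d \<Longrightarrow> S (pre_per (C g2) (C g)) N = F g2 N"
proof (induction N)
  case 0 then show ?case by (simp add: S_def F_0)
next
  case (Suc N)
  then have "N < nat d" by simp
  then show ?case using Suc per_C[OF q2 g2, of N] pre_per_lo[OF q2, of N g]
    by (simp add: S_def)
qed

lemma S_pre_hi:
  assumes q2: "quotient_of g2 = (c,d)" and g2: "0 \<le> g2" and qg: "quotient_of g = (p,q)" and g0: "0 \<le> g"
  shows "S (pre_per (C g2) (C g)) (nat d + n) = c + F g n"
proof (induction n)
  case 0
  have d: "0 < d" using q2 quotient_of_denom_pos by blast
  have "F g2 (nat d) = c" unfolding F_def using quot_val[OF q2] d by simp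
  then show ?case using S_pre_lo[OF q2 g2, of "nat d" g] by (simp add: F_0)
next
  case (Suc n)
  then show ?case using per_C[OF qg g0, of n] pre_per_hi[OF q2, of g n]
    by (simp add: S_def)
qed
lemma S_per:
  assumes qg: "quotient_of g = (p,q)" and g0: "0 \<le> g"
  shows "S (per (C g)) N = F g N"
  using S_shift[OF qg g0, of 0 N] by (simp add: F_0)

lemma beats:
  assumes qg: "quotient_of \<gamma> = (p,q)" and b: "0 < b" and d: "0 < d" and h: "b*c - a*d = 1"
    and pa: "a + c = p" and qb: "b + d = q" and q2: "quotient_of g2 = (c,d)" and g20: "0 \<le> g2"
    and gam0: "0 \<le> \<gamma>" and ggt: "\<gamma> < g" and qg': "quotient_of g = (p',q')"
  shows "S (pre_per (C g2) (C \<gamma>)) N \<le> S (per (C g)) N"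
    and "\<exists>N. S (pre_per (C g2) (C \<gamma>)) N < S (per (C g)) N"
proof -
  have g0: "0 \<le> g" using gam0 ggt by simp
  have gv: "\<gamma> = of_int (a+c) / of_int (b+d)" using quot_val[OF qg] pa qb by simp
  have g2v: "g2 = of_int c / of_int d" using quot_val[OF q2] .
  have qr: "(0::rat) < of_int q" using b d qb by simp
  have cqdp: "c * q - d * p = 1" using h pa qb by (auto simp: algebra_simps)
  have Spg: "S (per (C g)) M = F g M" for M using S_per[OF qg' g0] .
  have hi: "c + F \<gamma> n \<le> F g (nat d + n)" for n
  proof -
    define N where "N = nat d + n"
    define m where "m = F g N"
    have N1: "(1::rat) \<le> of_nat N" unfolding N_def using d by simp
    have "of_nat N * \<gamma> < of_nat N * g" using ggt N1 by simp
    also have "\<dots> \<le> of_int m" unfolding m_def F_def by simp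
    finally have "of_nat N * (of_int p / of_int q) < (of_int m :: rat)" using quot_val[OF qg] by simp
    hence "of_int (int N * p) < (of_int (m * q) :: rat)" using qr by (simp add: field_simps)
    hence lt: "int N * p < m * q" by (simp only: of_int_less_iff)
    have Nd: "int N = d + int n" unfolding N_def using d by simp
    have "int n * p \<le> (m - c) * q"
    proof -
      have "int N * p = d * p + int n * p" unfolding Nd by (simp add: algebra_simps)
      moreover have "(m - c) * q = m * q - c * q" by (simp add: algebra_simps)
      ultimately show ?thesis using lt cqdp by linarith
    qed
    hence "of_int (int n * p) \<le> (of_int ((m - c) * q) :: rat)" by (simp only: of_int_le_iff)
    hence "of_nat n * (of_int p / of_int q) \<le> (of_int (m - c) :: rat)" using qr by (simp add: field_simps)
    hence "F \<gamma> n \<le> m - c" unfolding F_def using quot_val[OF qg] by (simp add: ceiling_le_iff)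
    then show ?thesis unfolding m_def N_def by simp
  qed
  show "S (pre_per (C g2) (C \<gamma>)) N \<le> S (per (C g)) N"
  proof (cases "N \<le> nat d")
    case True
    have "S (pre_per (C g2) (C \<gamma>)) N = F g2 N" using S_pre_lo[OF q2 g20 True] .
    also have "\<dots> = F \<gamma> N" unfolding F_def g2v gv by (rule sym, rule L1[OF b d h]) (use True d in \<open>simp add: le_nat_iff\<close>)
    also have "\<dots> \<le> F g N" unfolding F_def using ggt by (intro ceiling_mono mult_left_mono) auto
    finally show ?thesis using Spg by simp
  next
    case False
    define n where "n = N - nat d"
    have Nn: "N = nat d + n" using False unfolding n_def by simp
    show ?thesis unfolding Nn Spg S_pre_hi[OF q2 g20 qg gam0] using hi .
  qed
  show "\<exists>N. S (pre_per (C g2) (C \<gamma>)) N < S (per (C g)) N"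
  proof -
    obtain n where n: "2 / (g - \<gamma>) < of_nat n" using reals_Archimedean2 by blast
    have gp: "0 < g - \<gamma>" using ggt by simp
    have n2: "2 < of_nat n * (g - \<gamma>)" using n gp by (simp add: divide_less_eq mult.commute)
    have dg: "of_int c - 1 \<le> of_int d * g"
    proof -
      have "of_int d * \<gamma> \<le> of_int d * g" using ggt d by simp
      moreover have "of_int d * \<gamma> = of_int c - 1 / of_int q"
      proof -
        have "of_int c - 1 / of_int q = (of_int (c*q) - 1) / (of_int q :: rat)" using qr by (simp add: field_simps)
        also have "of_int (c*q) - 1 = (of_int (d * p) :: rat)" proof -
          have "c*q = d*p + 1" using cqdp by simp
          then show ?thesis by simp
        qed
        finally show ?thesis using quot_val[OF qg] qr by simp
      qed
      moreover have "1 / of_int q \<le> (1::rat)" using qr b d qb by simp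
      ultimately show ?thesis by linarith
    qed
    have "of_int (c + F \<gamma> n) < of_int c + of_nat n * \<gamma> + (1::rat)"
      unfolding F_def using ceiling_correct[of "of_nat n * \<gamma>"] by simp
    also have "\<dots> < of_nat (nat d + n) * g"
    proof -
      have e1: "of_nat (nat d + n) * g = of_int d * g + of_nat n * g" using d by (simp add: distrib_right)
      have e2: "of_nat n * g = of_nat n * \<gamma> + of_nat n * (g - \<gamma>)" by (simp add: algebra_simps)
      show ?thesis unfolding e1 e2 using dg n2 by linarith
    qed
    also have "\<dots> \<le> of_int (F g (nat d + n))" unfolding F_def by simp
    finally have "c + F \<gamma> n < F g (nat d + n)" by (simp only: of_int_less_iff)
    then show ?thesis unfolding Spg using S_pre_hi[OF q2 g20 qg gam0, of n] by (intro exI[of _ "nat d + n"]) simp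
  qed
qed
theorem mainTheorem2:
  fixes \<beta> :: real and \<gamma> :: rat
  assumes "0 < \<gamma>" and "\<gamma> < 1"
    and "1 < \<beta>" and "\<beta> < 2"
    and "lex_le (per (w \<gamma>)) (quasi_greedy \<beta>)"
    and "lex_le (quasi_greedy \<beta>) (pre_per (w (right_parent \<gamma>)) (w \<gamma>))"
  shows "gamma_of \<beta> = real_of_rat \<gamma>"
proof -
  obtain p q where qg: "quotient_of \<gamma> = (p,q)" by (cases "quotient_of \<gamma>")
  obtain a b c d where abcd: "0 \<le> a" "a < b" "0 < c" "c \<le> d" "b*c - a*d = 1" "a + c = p" "b + d = q"
    and q2: "quotient_of (right_parent \<gamma>) = (c,d)"
    using rp[OF qg assms(1,2)] by blast
  define g2 where "g2 = right_parent \<gamma>"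
  have q2': "quotient_of g2 = (c,d)" using q2 unfolding g2_def .
  have b: "0 < b" and d: "0 < d" using abcd by auto
  have g2v: "g2 = of_int c / of_int d" using quot_val[OF q2'] .
  have g20: "0 \<le> g2" "g2 \<le> 1" unfolding g2v using abcd d by (auto simp: divide_le_eq)
  have gam0: "0 \<le> \<gamma>" "\<gamma> \<le> 1" using assms(1,2) by auto
  have wg: "w \<gamma> = C \<gamma>" using w_eq gam0 by blast
  have wg2: "w g2 = C g2" using w_eq g20 by blast
  define D where "D = quasi_greedy \<beta>"
  define B where "B = pre_per (C g2) (C \<gamma>)"
  have h1: "lex_le (per (C \<gamma>)) D" using assms(5) wg unfolding D_def by simp
  have h2: "lex_le D B" using assms(6) wg wg2 unfolding D_def B_def g2_def by simp
  define X where "X = {g. 0 \<le> g \<and> g \<le> 1 \<and> admissible \<beta> (per (w g))}"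
  have memX: "\<gamma> \<in> X"
  proof -
    have "lex_le (\<lambda>i. per (C \<gamma>) (i + j)) (per (C \<gamma>))" for j
    proof (rule lex_sums)
      fix N
      have "F \<gamma> (N + j) \<le> F \<gamma> N + F \<gamma> j"
        unfolding F_def by (simp add: distrib_right ceiling_add_le)
      then show "S (\<lambda>i. per (C \<gamma>) (i + j)) N \<le> S (per (C \<gamma>)) N"
        using S_shift[OF qg gam0(1), of j N] S_per[OF qg gam0(1), of N] by simp
    qed
    hence "lex_le (\<lambda>i. per (C \<gamma>) (i + j)) D" for j using h1 lex_trans by blast
    moreover have "per (C \<gamma>) i \<in> {0,1}" for i using per_C_01[OF qg gam0] .
    ultimately show ?thesis unfolding X_def admissible_def D_def using gam0 wg by simp
  qed
  have ub: "g \<le> \<gamma>" if "g \<in> X" for g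
  proof (rule ccontr)
    assume "\<not> g \<le> \<gamma>"
    hence ggt: "\<gamma> < g" by simp
    have g01: "0 \<le> g" "g \<le> 1" using that unfolding X_def by auto
    have "admissible \<beta> (per (w g))" using that unfolding X_def by auto
    hence "lex_le (\<lambda>i. per (w g) (i + 0)) D" unfolding admissible_def D_def by blast
    hence "lex_le (per (C g)) D" using w_eq[OF g01] by simp
    hence L: "lex_le (per (C g)) B" using h2 lex_trans by blast
    obtain p' q' where qg': "quotient_of g = (p',q')" by (cases "quotient_of g")
    have le: "S B N \<le> S (per (C g)) N" for N
      unfolding B_def by (rule beats(1)[OF qg b d abcd(5,6,7) q2' g20(1) gam0(1) ggt qg'])
    obtain N where lt: "S B N < S (per (C g)) N"
      unfolding B_def using beats(2)[OF qg b d abcd(5,6,7) q2' g20(1) gam0(1) ggt qg'] by blast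
    show False
    proof (cases "per (C g) = B")
      case True then show False using lt by simp
    next
      case False
      then obtain M where "S (per (C g)) M < S B M" using lex_strict[OF L] by blast
      then show False using le[of M] by simp
    qed
  qed
  have "Sup (real_of_rat ` X) = real_of_rat \<gamma>"
    by (rule cSup_eq_maximum) (use memX ub in \<open>auto simp: of_rat_less_eq\<close>)
  then show ?thesis unfolding gamma_of_def X_def .
qed

end
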